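(* Let $\mathcal{Z}=\{\boldsymbol{z}_1,\dots,\boldsymbol{z}_N\}\subset\mathbb{R}^d$ and let $\boldsymbol{z}$ be uniformly distributed on $\mathcal{Z}$, i.e. $\mathbb{P}(\boldsymbol{z}=\boldsymbol{z}_i)=1/N$. Let $\boldsymbol{U}\subset[N]$ be a random index set of size $b$ sampled uniformly without replacement, and let $\boldsymbol{V}\subset[N]$ be a random index set of size $N-1$ sampled uniformly without replacement, independent of $\boldsymbol{U}$. For an index set $I$ let $\bar{\mathcal{Z}}_I$ be the average of $\{\boldsymbol{z}_i:i\in I\}$. Then $$\mathbb{E}_{\boldsymbol{U},\boldsymbol{V}}\left(\frac{(b-|\boldsymbol{U}\cap\boldsymbol{V}|)^2}{b^2}(\bar{\mathcal{Z}}_{\boldsymbol{V}}-\bar{\mathcal{Z}}_{\boldsymbol{U}\cap\boldsymbol{V}^c})(\bar{\mathcal{Z}}_{\boldsymbol{V}}-\bar{\mathcal{Z}}_{\boldsymbol{U}\cap\boldsymbol{V}^c})^\top\right)=\frac{1}{Nb}\left(\frac{N}{N-1}\right)^2\mathrm{Cov}(\boldsymbol{z}).$$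
   Context: $\boldsymbol{V}^c=[N]\setminus\boldsymbol{V}$. When $\boldsymbol{U}\cap\boldsymbol{V}^c=\emptyset$ the prefactor $(b-|\boldsymbol{U}\cap\boldsymbol{V}|)^2/b^2$ is $0$ and the integrand is taken to be $0$. $\mathrm{Cov}(\boldsymbol{z})=\frac1N\sum_i(\boldsymbol{z}_i-\bar{\boldsymbol{z}})(\boldsymbol{z}_i-\bar{\boldsymbol{z}})^\top$ is the covariance of the uniform distribution on $\mathcal{Z}$. *)

theory Defs
  imports "HOL-Probability.Probability"
begin

definition outer :: "real ^ 'd \<Rightarrow> real ^ 'd \<Rightarrow> real ^ 'd ^ 'd" where
  "outer x y = (\<chi> i j. x $ i * y $ j)"

text \<open>Average of the points z_i, i in I (the empty average is 0; it only occurs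
  multiplied by a zero prefactor).\<close>
definition avg_idx :: "(nat \<Rightarrow> real ^ 'd) \<Rightarrow> nat set \<Rightarrow> real ^ 'd" where
  "avg_idx z I = (1 / real (card I)) *\<^sub>R (\<Sum>i\<in>I. z i)"

definition cov_unif :: "nat \<Rightarrow> (nat \<Rightarrow> real ^ 'd) \<Rightarrow> real ^ 'd ^ 'd" where
  "cov_unif N z = (1 / real N) *\<^sub>R
     (\<Sum>i<N. outer (z i - avg_idx z {..<N}) (z i - avg_idx z {..<N}))"

definition subsets_pmf :: "nat \<Rightarrow> nat \<Rightarrow> nat set pmf" where
  "subsets_pmf N k = pmf_of_set {S. S \<subseteq> {..<N} \<and> card S = k}"

end

theory Submission
  imports Defs
begin

lemma outer_scale: "outer (c *\<^sub>R x) (c *\<^sub>R x) = c\<^sup>2 *\<^sub>R outer x x"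
  by (simp add: outer_def vec_eq_iff power2_eq_square)

lemma outer_neg: "outer (- x) (- x) = outer x x"
  by (simp add: outer_def vec_eq_iff)

lemma card_subsets_with:
  assumes "j < N" "1 \<le> b"
  shows "card {U. U \<subseteq> {..<N} \<and> card U = b \<and> j \<in> U} = (N - 1) choose (b - 1)"
proof -
  have "bij_betw (\<lambda>U. U - {j}) {U. U \<subseteq> {..<N} \<and> card U = b \<and> j \<in> U}
          {W. W \<subseteq> {..<N} - {j} \<and> card W = b - 1}"
  proof (rule bij_betw_byWitness[where f' = "insert j"])
    show "\<forall>a\<in>{U. U \<subseteq> {..<N} \<and> card U = b \<and> j \<in> U}. insert j (a - {j}) = a" by auto
    show "\<forall>a\<in>{W. W \<subseteq> {..<N} - {j} \<and> card W = b - 1}. insert j a - {j} = a" by auto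
    show "(\<lambda>U. U - {j}) ` {U. U \<subseteq> {..<N} \<and> card U = b \<and> j \<in> U}
          \<subseteq> {W. W \<subseteq> {..<N} - {j} \<and> card W = b - 1}"
      by (auto intro: finite_subset)
    show "insert j ` {W. W \<subseteq> {..<N} - {j} \<and> card W = b - 1}
          \<subseteq> {U. U \<subseteq> {..<N} \<and> card U = b \<and> j \<in> U}"
    proof
      fix X assume "X \<in> insert j ` {W. W \<subseteq> {..<N} - {j} \<and> card W = b - 1}"
      then obtain W where X: "X = insert j W" and W: "W \<subseteq> {..<N} - {j}" "card W = b - 1" by auto
      then have "finite W" "j \<notin> W" by (auto intro: finite_subset)
      then have "card (insert j W) = b" using W assms by simp
      then show "X \<in> {U. U \<subseteq> {..<N} \<and> card U = b \<and> j \<in> U}" using X W assms(1) by auto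
    qed
  qed
  then have "card {U. U \<subseteq> {..<N} \<and> card U = b \<and> j \<in> U} =
             card {W. W \<subseteq> {..<N} - {j} \<and> card W = b - 1}"
    by (rule bij_betw_same_card)
  also have "\<dots> = card ({..<N} - {j}) choose (b - 1)"
    by (rule n_subsets) simp
  also have "card ({..<N} - {j}) = N - 1" using assms by simp
  finally show ?thesis .
qed

theorem lemma6:
  fixes N b :: nat and z :: "nat \<Rightarrow> real ^ 'd"
  assumes "N \<ge> 2" and "1 \<le> b" and "b \<le> N"
  shows "measure_pmf.expectation (pair_pmf (subsets_pmf N b) (subsets_pmf N (N - 1)))
           (\<lambda>(U, V). ((real b - real (card (U \<inter> V)))\<^sup>2 / (real b)\<^sup>2) *\<^sub>R
              outer (avg_idx z V - avg_idx z (U \<inter> ({..<N} - V)))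
                    (avg_idx z V - avg_idx z (U \<inter> ({..<N} - V))))
         = (1 / (real N * real b) * (real N / (real N - 1))\<^sup>2) *\<^sub>R cov_unif N z"
proof -
  define SA where "SA = {S. S \<subseteq> {..<N} \<and> card S = b}"
  define SB where "SB = {S. S \<subseteq> {..<N} \<and> card S = N - 1}"
  define f where "f = (\<lambda>(U, V). ((real b - real (card (U \<inter> V)))\<^sup>2 / (real b)\<^sup>2) *\<^sub>R
              outer (avg_idx z V - avg_idx z (U \<inter> ({..<N} - V)))
                    (avg_idx z V - avg_idx z (U \<inter> ({..<N} - V))))"
  define m where "m = avg_idx z {..<N}"
  define c where "c = real N / (real N - 1)"
  define g where "g = (\<lambda>j. outer (z j - m) (z j - m))"
  define C where "C = (N - 1) choose (b - 1)"
  have finA: "finite SA" unfolding SA_def by (auto intro: finite_subset)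
  have finB: "finite SB" unfolding SB_def by (auto intro: finite_subset)
  have cardA: "card SA = N choose b" unfolding SA_def by (subst n_subsets) auto
  have SB_eq: "SB = (\<lambda>j. {..<N} - {j}) ` {..<N}"
  proof
    show "SB \<subseteq> (\<lambda>j. {..<N} - {j}) ` {..<N}"
    proof
      fix S assume "S \<in> SB"
      then have S: "S \<subseteq> {..<N}" "card S = N - 1" unfolding SB_def by auto
      have "card ({..<N} - S) = 1" using S assms by (simp add: card_Diff_subset finite_subset)
      then obtain j where j: "{..<N} - S = {j}" by (auto simp: card_Suc_eq)
      then have "j < N" "S = {..<N} - {j}" using S by auto
      then show "S \<in> (\<lambda>j. {..<N} - {j}) ` {..<N}" by auto
    qed
    show "(\<lambda>j. {..<N} - {j}) ` {..<N} \<subseteq> SB" unfolding SB_def by auto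
  qed
  have inj: "inj_on (\<lambda>j. {..<N} - {j}) {..<N}"
    by (auto simp: inj_on_def)
  have cardB: "card SB = N" unfolding SB_eq using inj by (simp add: card_image)
  have neA: "SA \<noteq> {}" using finA cardA assms by (auto simp: card_eq_0_iff)
  have neB: "SB \<noteq> {}" using cardB assms by auto
  have "measure_pmf.expectation (pair_pmf (subsets_pmf N b) (subsets_pmf N (N - 1))) f
      = (\<Sum>x\<in>SA \<times> SB. pmf (pair_pmf (pmf_of_set SA) (pmf_of_set SB)) x *\<^sub>R f x)"
    unfolding subsets_pmf_def SA_def[symmetric] SB_def[symmetric]
    by (rule integral_measure_pmf) (use finA finB neA neB in auto)
  also have "\<dots> = (\<Sum>x\<in>SA \<times> SB. (1 / (real (card SA) * real N)) *\<^sub>R f x)"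
    by (rule sum.cong) (use finA finB neA neB cardB in \<open>auto simp: pmf_pair pmf_of_set[OF neA finA] pmf_of_set[OF neB finB]\<close>)
  also have "\<dots> = (\<Sum>U\<in>SA. \<Sum>V\<in>SB. (1 / (real (card SA) * real N)) *\<^sub>R f (U, V))"
    by (simp add: sum.cartesian_product split_def)
  also have "\<dots> = (\<Sum>V\<in>SB. \<Sum>U\<in>SA. (1 / (real (card SA) * real N)) *\<^sub>R f (U, V))"
    by (rule sum.swap)
  also have "\<dots> = (\<Sum>j<N. \<Sum>U\<in>SA. (1 / (real (card SA) * real N)) *\<^sub>R f (U, {..<N} - {j}))"
    unfolding SB_eq by (subst sum.reindex[OF inj]) simp
  also have "\<dots> = (\<Sum>j<N. (1 / (real (card SA) * real N)) *\<^sub>R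
                      (real C *\<^sub>R ((1 / (real b)\<^sup>2 * c\<^sup>2) *\<^sub>R g j)))"
  proof (rule sum.cong[OF refl])
    fix j assume j: "j \<in> {..<N}"
    have fU: "f (U, {..<N} - {j}) = (if j \<in> U then (1 / (real b)\<^sup>2 * c\<^sup>2) *\<^sub>R g j else 0)"
      if U: "U \<in> SA" for U
    proof (cases "j \<in> U")
      case True
      have U1: "U \<inter> ({..<N} - {j}) = U - {j}" using U unfolding SA_def by auto
      have U2: "U \<inter> ({..<N} - ({..<N} - {j})) = {j}" using True j by auto
      have cU: "card (U - {j}) = b - 1" using U True unfolding SA_def by (auto intro: finite_subset)
      have pre: "(real b - real (b - 1))\<^sup>2 / (real b)\<^sup>2 = 1 / (real b)\<^sup>2" using assms by (simp add: of_nat_diff)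
      have avgV: "avg_idx z ({..<N} - {j}) = (1 / (real N - 1)) *\<^sub>R ((\<Sum>i<N. z i) - z j)"
        unfolding avg_idx_def using j assms by (simp add: sum_diff1 of_nat_diff)
      have avgj: "avg_idx z {j} = z j" by (simp add: avg_idx_def)
      have m_eq: "m = (1 / real N) *\<^sub>R (\<Sum>i<N. z i)" by (simp add: m_def avg_idx_def)
      have vec: "(1 / (real N - 1)) *\<^sub>R ((\<Sum>i<N. z i) - z j) - z j = (- c) *\<^sub>R (z j - m)"
        unfolding m_eq c_def using assms
        by (simp add: vec_eq_iff field_simps)
      show ?thesis using True
        unfolding f_def g_def
        using assms by (simp add: U1 U2 cU avgV avgj vec outer_scale outer_neg of_nat_diff)
    next
      case False
      have U1: "U \<inter> ({..<N} - {j}) = U" using U False unfolding SA_def by auto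
      have cU: "card U = b" using U unfolding SA_def by auto
      show ?thesis using False unfolding f_def by (simp add: U1 cU)
    qed
    have "(\<Sum>U\<in>SA. (1 / (real (card SA) * real N)) *\<^sub>R f (U, {..<N} - {j}))
        = (1 / (real (card SA) * real N)) *\<^sub>R (\<Sum>U\<in>SA. (if j \<in> U then (1 / (real b)\<^sup>2 * c\<^sup>2) *\<^sub>R g j else 0))"
      by (simp add: scaleR_sum_right fU)
    also have "(\<Sum>U\<in>SA. (if j \<in> U then (1 / (real b)\<^sup>2 * c\<^sup>2) *\<^sub>R g j else 0))
        = real (card {U\<in>SA. j \<in> U}) *\<^sub>R ((1 / (real b)\<^sup>2 * c\<^sup>2) *\<^sub>R g j)"
      by (simp only: sum.inter_filter[OF finA, symmetric] sum_constant_scaleR)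
    also have "card {U\<in>SA. j \<in> U} = C"
      unfolding C_def SA_def using card_subsets_with[of j N b] j assms by simp
    finally show "(\<Sum>U\<in>SA. (1 / (real (card SA) * real N)) *\<^sub>R f (U, {..<N} - {j})) =
       (1 / (real (card SA) * real N)) *\<^sub>R (real C *\<^sub>R ((1 / (real b)\<^sup>2 * c\<^sup>2) *\<^sub>R g j))" .
  qed
  also have "\<dots> = (real C / (real (card SA) * real N) * (1 / (real b)\<^sup>2 * c\<^sup>2)) *\<^sub>R (\<Sum>j<N. g j)"
    by (simp add: scaleR_sum_right)
  also have "\<dots> = (1 / (real N * real b) * c\<^sup>2) *\<^sub>R cov_unif N z"
  proof -
    have "real b * real (N choose b) = real N * real C"
      unfolding C_def using times_binomial_minus1_eq[of b N] assms by (metis of_nat_mult less_le_trans zero_less_one)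
    then have "real C / (real (card SA) * real N) * (1 / (real b)\<^sup>2 * c\<^sup>2)
             = 1 / (real N * real b) * c\<^sup>2 * (1 / real N)"
    proof -
      have p: "real (N choose b) > 0" using assms by simp
      have "real N > 0" "real b > 0" using assms by auto
      have "real C \<noteq> 0" using p \<open>real b > 0\<close> \<open>real b * real (N choose b) = real N * real C\<close>
        by (metis mult_zero_right not_less_iff_gr_or_eq mult_pos_pos)
      then show ?thesis unfolding cardA using p \<open>real b * real (N choose b) = real N * real C\<close>
        by (simp add: field_simps power2_eq_square del: of_nat_eq_0_iff)
    qed
    then show ?thesis unfolding cov_unif_def g_def m_def by simp
  qed
  finally show ?thesis unfolding f_def c_def .
qed

end
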